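(* Let $X$ be a Banach space and $(x_n)_{n\in\mathbb{N}}$ a sequence in $X$. Let $E=\left\{s \in S : \left(\sum_{i=1}^n x_{s(i)}\right)_n \text{ is bounded}\right\}$ and $F=\left\{p \in P : \left(\sum_{i=1}^n x_{p(i)}\right)_n \text{ is bounded}\right\}$. If $E \neq S$ (equivalently, $F \neq P$), then $E$ is meager in $S$ and $F$ is meager in $P$.
   Context: $S=\{s\in\mathbb{N}^{\mathbb{N}} : s \text{ strictly increasing}\}$ and $P=\{p\in\mathbb{N}^{\mathbb{N}} : p \text{ a bijection of } \mathbb{N}\}$, both with the subspace topology of $\mathbb{N}^{\mathbb{N}}$ carrying the product topology of discrete spaces $\mathbb{N}$ (both are Polish spaces). *)

theory Defs
  imports "HOL-Analysis.Analysis"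
begin

definition baire_top :: "(nat \<Rightarrow> nat) topology" where
  "baire_top = product_topology (\<lambda>_. discrete_topology (UNIV :: nat set)) UNIV"

definition S_set :: "(nat \<Rightarrow> nat) set" where
  "S_set = {s. strict_mono s}"

definition P_set :: "(nat \<Rightarrow> nat) set" where
  "P_set = {p. bij p}"

definition nowhere_dense_in :: "'a topology \<Rightarrow> 'a set \<Rightarrow> bool" where
  "nowhere_dense_in T A \<longleftrightarrow> A \<subseteq> topspace T \<and> T interior_of (T closure_of A) = {}"

definition meager_in :: "'a topology \<Rightarrow> 'a set \<Rightarrow> bool" where
  "meager_in T A \<longleftrightarrow> A \<subseteq> topspace T \<and>
     (\<exists>N :: nat \<Rightarrow> 'a set. (\<forall>n. nowhere_dense_in T (N n)) \<and> A \<subseteq> (\<Union>n. N n))"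

end

theory Submission
  imports Defs
begin

definition cyl :: "(nat \<Rightarrow> nat) \<Rightarrow> nat \<Rightarrow> (nat \<Rightarrow> nat) set" where
  "cyl t k = {f. \<forall>i<k. f i = t i}"

lemma topspace_baire: "topspace baire_top = UNIV"
  unfolding baire_top_def by (auto simp: PiE_def Pi_def extensional_def)

lemma cyl_open: "openin baire_top (cyl t k)"
proof -
  have eq: "cyl t k = PiE UNIV (\<lambda>i. if i<k then {t i} else UNIV)"
    unfolding cyl_def by (auto simp: PiE_def Pi_def extensional_def split: if_splits)
  have "finite {i \<in> UNIV. (if i<k then {t i} else UNIV) \<noteq> topspace (discrete_topology (UNIV::nat set))}"
    by (rule finite_subset[of _ "{..<k}"]) auto
  then show ?thesis unfolding eq baire_top_def
    by (subst openin_PiE_gen) auto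
qed

lemma cyl_basis:
  assumes "openin baire_top U" "u \<in> U"
  shows "\<exists>k. cyl u k \<subseteq> U"
proof -
  obtain X where X: "u \<in> PiE UNIV X" "finite {i. X i \<noteq> UNIV}" "PiE UNIV X \<subseteq> U"
    using product_topology_open_contains_basis[OF assms[unfolded baire_top_def]] by auto
  obtain k where k: "\<forall>i\<in>{i. X i \<noteq> UNIV}. i < k"
    using X(2) finite_nat_bounded by (metis lessThan_iff subset_eq)
  have "cyl u k \<subseteq> PiE UNIV X"
  proof
    fix f assume f: "f \<in> cyl u k"
    have "f i \<in> X i" for i
    proof (cases "i < k")
      case True then show ?thesis using f X(1) by (auto simp: cyl_def PiE_def Pi_def)
    next
      case False then show ?thesis using k by auto
    qed
    then show "f \<in> PiE UNIV X" by (auto simp: PiE_def extensional_def)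
  qed
  then show ?thesis using X(3) by blast
qed


lemma generic_meager:
  fixes x :: "nat \<Rightarrow> 'a::real_normed_vector"
  assumes ext: "\<And>u k M. u \<in> A \<Longrightarrow> \<exists>t\<in>A. (\<forall>i<k. t i = u i) \<and> (\<exists>n. norm (\<Sum>i<n. x (t i)) > M)"
  shows "meager_in (subtopology baire_top A) {f\<in>A. bounded (range (\<lambda>n. \<Sum>i<n. x (f i)))}"
proof -
  let ?T = "subtopology baire_top A"
  define N where "N m = {f\<in>A. \<forall>n. norm (\<Sum>i<n. x (f i)) \<le> real m}" for m :: nat
  have tsp: "topspace ?T = A" by (simp add: topspace_baire)
  have nd: "nowhere_dense_in ?T (N m)" for m
    unfolding nowhere_dense_in_def
  proof
    show "N m \<subseteq> topspace ?T" using tsp N_def by auto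
    show "?T interior_of (?T closure_of N m) = {}"
    proof (rule ccontr)
      assume "?T interior_of (?T closure_of N m) \<noteq> {}"
      then obtain v U where U: "openin ?T U" "v \<in> U" "U \<subseteq> ?T closure_of N m"
        unfolding interior_of_def by auto
      obtain U' where U': "openin baire_top U'" "U = U' \<inter> A"
        using U(1) openin_subtopology by metis
      have vA: "v \<in> A" "v \<in> U'" using U U' by auto
      obtain k where k: "cyl v k \<subseteq> U'" using cyl_basis[OF U'(1) vA(2)] by auto
      obtain t n where t: "t \<in> A" "\<forall>i<k. t i = v i" "norm (\<Sum>i<n. x (t i)) > real m"
        using ext[OF vA(1), of k "real m"] by auto
      define V where "V = cyl t (max k n) \<inter> A"
      have Vo: "openin ?T V" unfolding V_def openin_subtopology using cyl_open by blast
      have tV: "t \<in> V" unfolding V_def cyl_def using t by auto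
      have "V \<subseteq> U" unfolding V_def U'(2) using k t(2) by (auto simp: cyl_def)
      then have "t \<in> ?T closure_of N m" using tV U(3) by auto
      then obtain y where y: "y \<in> N m" "y \<in> V"
        using Vo tV unfolding in_closure_of by blast
      have "(\<Sum>i<n. x (y i)) = (\<Sum>i<n. x (t i))"
        using y(2) by (intro sum.cong) (auto simp: V_def cyl_def)
      then show False using y(1) t(3) unfolding N_def by (metis (mono_tags, lifting) mem_Collect_eq not_le)
    qed
  qed
  have cov: "{f\<in>A. bounded (range (\<lambda>n. \<Sum>i<n. x (f i)))} \<subseteq> (\<Union>m. N m)"
  proof
    fix f assume "f \<in> {f\<in>A. bounded (range (\<lambda>n. \<Sum>i<n. x (f i)))}"
    then have fA: "f \<in> A" and b: "bounded (range (\<lambda>n. \<Sum>i<n. x (f i)))" by auto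
    obtain R where R: "\<forall>n. norm (\<Sum>i<n. x (f i)) \<le> R" using b unfolding bounded_iff by auto
    have "\<forall>n. norm (\<Sum>i<n. x (f i)) \<le> real (nat \<lceil>R\<rceil>)"
      using R by (meson order.trans real_nat_ceiling_ge)
    then show "f \<in> (\<Union>m. N m)" using fA unfolding N_def by blast
  qed
  show ?thesis unfolding meager_in_def using nd cov tsp by auto
qed


lemma unbounded_tail:
  fixes x :: "nat \<Rightarrow> 'a::real_normed_vector" and s0 :: "nat \<Rightarrow> nat"
  assumes "\<not> bounded (range (\<lambda>n. \<Sum>i<n. x (s0 i)))"
  shows "\<exists>j. norm (K + ((\<Sum>i<c+j. x (s0 i)) - (\<Sum>i<c. x (s0 i)))) > M"
proof (rule ccontr)
  let ?G = "\<lambda>n. \<Sum>i<n. x (s0 i)"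
  assume "\<not> ?thesis"
  then have h: "norm (K + (?G (c+j) - ?G c)) \<le> M" for j by (meson not_le)
  have b1: "norm (?G (c+j)) \<le> M + norm K + norm (?G c)" for j
  proof -
    have "?G (c+j) = (K + (?G (c+j) - ?G c)) - K + ?G c" by simp
    moreover have "norm ((K + (?G (c+j) - ?G c)) - K + ?G c) \<le> norm ((K + (?G (c+j) - ?G c)) - K) + norm (?G c)"
      by (rule norm_triangle_ineq)
    moreover have "norm ((K + (?G (c+j) - ?G c)) - K) \<le> norm (K + (?G (c+j) - ?G c)) + norm K"
      by (rule norm_triangle_ineq4)
    ultimately have "norm ((K + (?G (c+j) - ?G c)) - K + ?G c) \<le> norm (K + (?G (c+j) - ?G c)) + norm K + norm (?G c)"
      by linarith
    then have "norm (?G (c+j)) \<le> norm (K + (?G (c+j) - ?G c)) + norm K + norm (?G c)"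
      by simp
    then show ?thesis using h[of j] by linarith
  qed
  have "range ?G \<subseteq> ?G ` {..<c} \<union> cball 0 (M + norm K + norm (?G c))"
  proof
    fix y assume "y \<in> range ?G"
    then obtain n where n: "y = ?G n" by auto
    show "y \<in> ?G ` {..<c} \<union> cball 0 (M + norm K + norm (?G c))"
    proof (cases "n < c")
      case True then show ?thesis using n by auto
    next
      case False
      then obtain j where "n = c + j" by (metis le_add_diff_inverse not_le)
      then show ?thesis using n b1[of j] by auto
    qed
  qed
  then have "bounded (range ?G)"
    by (rule bounded_subset[OF bounded_Un[THEN iffD2, OF conjI, OF finite_imp_bounded[OF finite_imageI[OF finite_lessThan]] bounded_cball]])
  then show False using assms by simp
qed

lemma tail_sum:
  fixes x :: "nat \<Rightarrow> 'a::ab_group_add" and t s0 :: "nat \<Rightarrow> nat" and L k c :: nat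
  assumes "\<forall>j<L. t (k+j) = s0 (c+j)"
  shows "(\<Sum>i<k+L. x (t i)) = (\<Sum>i<k. x (t i)) + ((\<Sum>i<c+L. x (s0 i)) - (\<Sum>i<c. x (s0 i)))"
  using assms
proof (induction L)
  case 0 then show ?case by simp
next
  case (Suc L)
  then have "(\<Sum>i<k+L. x (t i)) = (\<Sum>i<k. x (t i)) + ((\<Sum>i<c+L. x (s0 i)) - (\<Sum>i<c. x (s0 i)))"
    by auto
  moreover have "t (k+L) = s0 (c+L)" using Suc.prems by auto
  ultimately show ?case by (simp add: algebra_simps)
qed

lemma ext_S:
  fixes x :: "nat \<Rightarrow> 'a::real_normed_vector" and s0 u :: "nat \<Rightarrow> nat"
  assumes s0: "strict_mono s0" "\<not> bounded (range (\<lambda>n. \<Sum>i<n. x (s0 i)))"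
    and u: "strict_mono u"
  shows "\<exists>t\<in>S_set. (\<forall>i<k. t i = u i) \<and> (\<exists>n. norm (\<Sum>i<n. x (t i)) > M)"
proof -
  define c where "c = u k"
  define t where "t i = (if i < k then u i else s0 (c + (i - k)))" for i
  obtain j where j: "norm ((\<Sum>i<k. x (u i)) + ((\<Sum>i<c+j. x (s0 i)) - (\<Sum>i<c. x (s0 i)))) > M"
    using unbounded_tail[of x s0, OF s0(2)] by blast
  have "(\<Sum>i<k+j. x (t i)) = (\<Sum>i<k. x (t i)) + ((\<Sum>i<c+j. x (s0 i)) - (\<Sum>i<c. x (s0 i)))"
    by (rule tail_sum) (simp add: t_def)
  moreover have "(\<Sum>i<k. x (t i)) = (\<Sum>i<k. x (u i))" by (simp add: t_def)
  ultimately have n: "norm (\<Sum>i<k+j. x (t i)) > M" using j by simp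
  have "strict_mono t"
  proof (rule strict_monoI)
    fix a b :: nat assume ab: "a < b"
    show "t a < t b"
    proof (cases "b < k")
      case True then show ?thesis using ab u by (simp add: t_def strict_mono_less)
    next
      case False
      show ?thesis
      proof (cases "a < k")
        case True
        have "u a < u k" using True u by (simp add: strict_mono_less)
        also have "u k \<le> c + (b - k)" by (simp add: c_def)
        also have "\<dots> \<le> s0 (c + (b - k))" using s0(1) by (simp add: strict_mono_imp_increasing)
        finally show ?thesis using True False by (simp add: t_def)
      next
        case False
        then show ?thesis using ab \<open>\<not> b < k\<close> s0(1) by (simp add: t_def strict_mono_less)
      qed
    qed
  qed
  moreover have "\<forall>i<k. t i = u i" by (simp add: t_def)
  ultimately show ?thesis using n unfolding S_set_def by blast
qed


lemma ext_P:
  fixes x :: "nat \<Rightarrow> 'a::real_normed_vector" and s0 u :: "nat \<Rightarrow> nat"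
  assumes s0: "strict_mono s0" "\<not> bounded (range (\<lambda>n. \<Sum>i<n. x (s0 i)))"
    and u: "bij u"
  shows "\<exists>t\<in>P_set. (\<forall>i<k. t i = u i) \<and> (\<exists>n. norm (\<Sum>i<n. x (t i)) > M)"
proof -
  define c where "c = Max (u ` {..<k}) + 1"
  have uc: "i < k \<Longrightarrow> u i < c" for i unfolding c_def
    using Max_ge[of "u ` {..<k}" "u i"] by (simp add: less_Suc_eq_le)
  define f where "f i = (if i < k then u i else s0 (c + (i - k)))" for i
  obtain j where j: "norm ((\<Sum>i<k. x (u i)) + ((\<Sum>i<c+j. x (s0 i)) - (\<Sum>i<c. x (s0 i)))) > M"
    using unbounded_tail[of x s0, OF s0(2)] by blast
  define N where "N = k + j"
  define B where "B = f ` {..<N}"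
  define t where "t i = (if i < N then f i else enumerate (- B) (i - N))" for i
  have "(\<Sum>i<k+j. x (t i)) = (\<Sum>i<k. x (t i)) + ((\<Sum>i<c+j. x (s0 i)) - (\<Sum>i<c. x (s0 i)))"
    by (rule tail_sum) (simp add: t_def f_def N_def)
  moreover have "(\<Sum>i<k. x (t i)) = (\<Sum>i<k. x (u i))" by (simp add: t_def f_def N_def)
  ultimately have n: "norm (\<Sum>i<k+j. x (t i)) > M" using j by simp
  have agree: "\<forall>i<k. t i = u i" by (simp add: t_def f_def N_def)
  have injf: "inj_on f {..<N}"
  proof (rule inj_onI)
    fix a b assume a: "a \<in> {..<N}" and b: "b \<in> {..<N}" and e: "f a = f b"
    have iu: "inj u" using u bij_is_inj by auto
    have is0: "inj s0" using s0(1) strict_mono_imp_inj_on by auto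
    have big: "i \<ge> k \<Longrightarrow> c \<le> f i" for i
      using strict_mono_imp_increasing[OF s0(1), of "c + (i - k)"] by (simp add: f_def)
    show "a = b"
    proof (cases "a < k")
      case True
      show ?thesis
      proof (cases "b < k")
        case True then show ?thesis using \<open>a < k\<close> e iu by (simp add: f_def inj_eq)
      next
        case False then show ?thesis using \<open>a < k\<close> e big[of b] uc[of a] by (simp add: f_def)
      qed
    next
      case False
      show ?thesis
      proof (cases "b < k")
        case True then show ?thesis using \<open>\<not> a < k\<close> e big[of a] uc[of b] by (simp add: f_def)
      next
        case False then show ?thesis using \<open>\<not> a < k\<close> e is0 by (simp add: f_def inj_eq)
      qed
    qed
  qed
  have b1: "bij_betw t {..<N} B"
  proof -
    have "bij_betw f {..<N} B" using injf unfolding B_def bij_betw_def by simp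
    then show ?thesis by (rule bij_betw_cong[THEN iffD1, rotated]) (simp add: t_def)
  qed
  have "infinite (- B)" using B_def by (simp add: Compl_eq_Diff_UNIV infinite_UNIV_nat Diff_infinite_finite)
  then have en: "bij_betw (enumerate (- B)) UNIV (- B)" by (rule bij_enumerate)
  have sh: "bij_betw (\<lambda>i. i - N) {N..} UNIV"
    by (rule bij_betw_byWitness[where f' = "\<lambda>i. i + N"]) auto
  have b2: "bij_betw t {N..} (- B)"
  proof -
    have "bij_betw (enumerate (- B) \<circ> (\<lambda>i. i - N)) {N..} (- B)" by (rule bij_betw_trans[OF sh en])
    then show ?thesis by (rule bij_betw_cong[THEN iffD1, rotated]) (simp add: t_def)
  qed
  have "bij_betw t ({..<N} \<union> {N..}) (B \<union> - B)" by (rule bij_betw_combine[OF b1 b2]) auto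
  moreover have "{..<N} \<union> {N..} = (UNIV :: nat set)" by auto
  ultimately have "bij t" by simp
  then show ?thesis using agree n unfolding P_set_def by blast
qed

theorem mainTheorem2:
  fixes x :: "nat \<Rightarrow> 'a::banach"
  defines "E \<equiv> {s \<in> S_set. bounded (range (\<lambda>n. \<Sum>i<n. x (s i)))}"
      and "F \<equiv> {p \<in> P_set. bounded (range (\<lambda>n. \<Sum>i<n. x (p i)))}"
  assumes "E \<noteq> S_set"
  shows "meager_in (subtopology baire_top S_set) E \<and> meager_in (subtopology baire_top P_set) F"
proof -
  obtain s0 :: "nat \<Rightarrow> nat" where s0: "strict_mono s0" "\<not> bounded (range (\<lambda>n. \<Sum>i<n. x (s0 i)))"
  proof -
    obtain s :: "nat \<Rightarrow> nat" where "s \<in> S_set" "s \<notin> E" using assms(3) unfolding E_def by auto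
    then have "strict_mono s" "\<not> bounded (range (\<lambda>n. \<Sum>i<n. x (s i)))" unfolding E_def S_set_def by auto
    then show ?thesis using that by blast
  qed
  have "meager_in (subtopology baire_top S_set) E"
    unfolding E_def
    by (rule generic_meager) (use ext_S[where ?x=x and ?s0.0=s0, OF s0] in \<open>auto simp: S_set_def\<close>)
  moreover have "meager_in (subtopology baire_top P_set) F"
    unfolding F_def
    by (rule generic_meager) (use ext_P[where ?x=x and ?s0.0=s0, OF s0] in \<open>auto simp: P_set_def\<close>)
  ultimately show ?thesis by blast
qed

end
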